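(* Let $T$ be a set of $n$ transactions with a nonempty symmetric irreflexive conflict relation $\bowtie$. Let $M=\min_\pi p(\pi)$ over all total orders $\pi$ of $T$, and let $ch$ be the maximum number $m$ such that there exist distinct transactions $tx_1,\dots,tx_m$ with $tx_1\bowtie tx_2\bowtie\cdots\bowtie tx_m$. Then the set of concurrency levels $\{n/p(\pi):\pi \text{ a total order of } T\}$ has at least $\alpha=\left\lceil \frac{ch-(M-1)}{M-1}\right\rceil$ distinct elements.
   Context: A set of transactions is conflict-free if no two of its elements conflict. For a total order $\pi$ of $T$, a $\pi$-respecting phase sequence is an ordered partition $(P_1,\dots,P_m)$ of $T$ into conflict-free sets (phases) such that whenever $tx\bowtie tx'$ and $tx$ precedes $tx'$ in $\pi$, the phase containing $tx$ has a smaller index than the phase containing $tx'$. $p(\pi)$, the necessary number of phases for execution given $\pi$, is the minimum length $m$ of a $\pi$-respecting phase sequence, and $n/p(\pi)$ is the concurrency level of $\pi$. *)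

theory Defs
  imports Complex_Main
begin

definition total_order_of :: "'a set \<Rightarrow> 'a list \<Rightarrow> bool" where
  "total_order_of T \<pi> \<longleftrightarrow> distinct \<pi> \<and> set \<pi> = T"

definition precedes :: "'a list \<Rightarrow> 'a \<Rightarrow> 'a \<Rightarrow> bool" where
  "precedes \<pi> x y \<longleftrightarrow> (\<exists>i j. i < j \<and> j < length \<pi> \<and> \<pi> ! i = x \<and> \<pi> ! j = y)"

definition conflict_free :: "('a \<Rightarrow> 'a \<Rightarrow> bool) \<Rightarrow> 'a set \<Rightarrow> bool" where
  "conflict_free C P \<longleftrightarrow> (\<forall>x\<in>P. \<forall>y\<in>P. x \<noteq> y \<longrightarrow> \<not> C x y)"

definition respecting_phase_seq ::
  "('a \<Rightarrow> 'a \<Rightarrow> bool) \<Rightarrow> 'a set \<Rightarrow> 'a list \<Rightarrow> 'a set list \<Rightarrow> bool" where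
  "respecting_phase_seq C T \<pi> Ps \<longleftrightarrow>
     (\<forall>i < length Ps. Ps ! i \<noteq> {} \<and> conflict_free C (Ps ! i)) \<and>
     (\<forall>i j. i < length Ps \<and> j < length Ps \<and> i \<noteq> j \<longrightarrow> Ps ! i \<inter> Ps ! j = {}) \<and>
     \<Union> (set Ps) = T \<and>
     (\<forall>i j x y. i < length Ps \<and> j < length Ps \<and> x \<in> Ps ! i \<and> y \<in> Ps ! j \<and>
        C x y \<and> precedes \<pi> x y \<longrightarrow> i < j)"

definition num_phases :: "('a \<Rightarrow> 'a \<Rightarrow> bool) \<Rightarrow> 'a set \<Rightarrow> 'a list \<Rightarrow> nat" where
  "num_phases C T \<pi> = (LEAST m. \<exists>Ps. respecting_phase_seq C T \<pi> Ps \<and> length Ps = m)"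

definition concurrency_level :: "('a \<Rightarrow> 'a \<Rightarrow> bool) \<Rightarrow> 'a set \<Rightarrow> 'a list \<Rightarrow> real" where
  "concurrency_level C T \<pi> = real (card T) / real (num_phases C T \<pi>)"

definition conflict_chain :: "('a \<Rightarrow> 'a \<Rightarrow> bool) \<Rightarrow> 'a set \<Rightarrow> 'a list \<Rightarrow> bool" where
  "conflict_chain C T xs \<longleftrightarrow> distinct xs \<and> set xs \<subseteq> T \<and>
     (\<forall>i. i + 1 < length xs \<longrightarrow> C (xs ! i) (xs ! (i + 1)))"

definition ch :: "('a \<Rightarrow> 'a \<Rightarrow> bool) \<Rightarrow> 'a set \<Rightarrow> nat" where
  "ch C T = Max {length xs | xs. conflict_chain C T xs}"

definition min_phases :: "('a \<Rightarrow> 'a \<Rightarrow> bool) \<Rightarrow> 'a set \<Rightarrow> nat" where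
  "min_phases C T = Min {num_phases C T \<pi> | \<pi>. total_order_of T \<pi>}"

end

theory Submission
  imports Defs
begin

lemma precedes_Nil[simp]: "\<not> precedes [] a b"
  by (simp add: precedes_def)

lemma precedes_Cons: "precedes (y # ys) a b \<longleftrightarrow> (y = a \<and> b \<in> set ys) \<or> precedes ys a b"
proof
  assume "precedes (y # ys) a b"
  then obtain i j where ij: "i < j" "j < length (y # ys)" "(y # ys) ! i = a" "(y # ys) ! j = b"
    unfolding precedes_def by blast
  show "(y = a \<and> b \<in> set ys) \<or> precedes ys a b"
  proof (cases i)
    case 0
    then have "y = a" using ij by simp
    moreover have "b \<in> set ys" using ij 0
      by (metis Suc_less_eq gr0_implies_Suc length_Cons nth_Cons_Suc nth_mem)
    ultimately show ?thesis by simp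
  next
    case (Suc i')
    then obtain j' where "j = Suc j'" using ij by (cases j) auto
    then have "precedes ys a b" using ij Suc unfolding precedes_def
      by (intro exI[of _ i'] exI[of _ j']) auto
    then show ?thesis by simp
  qed
next
  assume "(y = a \<and> b \<in> set ys) \<or> precedes ys a b"
  then show "precedes (y # ys) a b"
  proof
    assume h: "y = a \<and> b \<in> set ys"
    then obtain j where "j < length ys" "ys ! j = b" by (meson in_set_conv_nth)
    then show ?thesis using h unfolding precedes_def
      by (intro exI[of _ 0] exI[of _ "Suc j"]) auto
  next
    assume "precedes ys a b"
    then obtain i j where "i < j" "j < length ys" "ys ! i = a" "ys ! j = b"
      unfolding precedes_def by blast
    then show ?thesis unfolding precedes_def
      by (intro exI[of _ "Suc i"] exI[of _ "Suc j"]) auto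
  qed
qed

lemma precedes_set: "precedes ys a b \<Longrightarrow> a \<in> set ys \<and> b \<in> set ys"
  by (induction ys) (auto simp: precedes_Cons)

lemma precedes_total: "a \<in> set ys \<Longrightarrow> b \<in> set ys \<Longrightarrow> a \<noteq> b \<Longrightarrow> precedes ys a b \<or> precedes ys b a"
  by (induction ys) (auto simp: precedes_Cons)

lemma precedes_filter: "precedes (filter P ys) a b \<Longrightarrow> precedes ys a b"
  by (induction ys) (auto simp: precedes_Cons split: if_splits)

lemma precedes_filter2: "precedes ys a b \<Longrightarrow> P a \<Longrightarrow> P b \<Longrightarrow> precedes (filter P ys) a b"
  by (induction ys) (auto simp: precedes_Cons)

definition mv :: "'a \<Rightarrow> 'a list \<Rightarrow> 'a list" where
  "mv x p = x # filter (\<lambda>y. y \<noteq> x) p"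

lemma mv_total: "total_order_of T p \<Longrightarrow> x \<in> T \<Longrightarrow> total_order_of T (mv x p)"
  unfolding total_order_of_def mv_def by auto

lemma foldr_mv_total: "total_order_of T p \<Longrightarrow> set xs \<subseteq> T \<Longrightarrow> total_order_of T (foldr mv xs p)"
  by (induction xs) (auto intro: mv_total)

lemma set_foldr_mv: "set (foldr mv xs p) = set xs \<union> set p"
  by (induction xs) (auto simp: mv_def)

lemma foldr_mv_precedes:
  "distinct xs \<Longrightarrow> i + 1 < length xs \<Longrightarrow> precedes (foldr mv xs p) (xs ! i) (xs ! (i + 1))"
proof (induction xs arbitrary: i)
  case Nil
  then show ?case by simp
next
  case (Cons a xs)
  show ?case
  proof (cases i)
    case 0
    then have "xs ! 0 \<in> set xs" "xs ! 0 \<noteq> a" using Cons.prems by auto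
    moreover have "xs ! 0 \<in> set (foldr mv xs p)" using \<open>xs ! 0 \<in> set xs\<close> by (simp add: set_foldr_mv)
    ultimately show ?thesis using 0 by (simp add: mv_def[of a] precedes_Cons)
  next
    case (Suc i')
    then have "precedes (foldr mv xs p) (xs ! i') (xs ! (i' + 1))" using Cons by auto
    moreover have "xs ! i' \<noteq> a" "xs ! (i' + 1) \<noteq> a" using Cons.prems Suc
      by (auto simp: nth_mem)
    ultimately show ?thesis using Suc
      by (simp add: mv_def[of a] precedes_Cons precedes_filter2)
  qed
qed


lemma phases_from_fun:
  assumes "\<forall>x\<in>S. f x < m" "S \<subseteq> set p"
    "\<forall>x\<in>S. \<forall>y\<in>S. C x y \<longrightarrow> C y x"
    "\<forall>x\<in>S. \<forall>y\<in>S. C x y \<and> precedes p x y \<longrightarrow> f x < f y"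
  shows "\<exists>Ps. respecting_phase_seq C S p Ps \<and> length Ps \<le> m"
  using assms
proof (induction m arbitrary: S)
  case 0
  then have "S = {}" by auto
  then show ?case by (intro exI[of _ "[]"]) (simp add: respecting_phase_seq_def)
next
  case (Suc m)
  define S' where "S' = {x\<in>S. f x < m}"
  define top where "top = {x\<in>S. f x = m}"
  have SS: "S = S' \<union> top" using Suc.prems(1) unfolding S'_def top_def by auto
  have S'S: "S' \<subseteq> S" unfolding S'_def by auto
  have "\<forall>x\<in>S'. f x < m" unfolding S'_def by auto
  moreover have "S' \<subseteq> set p" using S'S Suc.prems(2) by blast
  moreover have "\<forall>x\<in>S'. \<forall>y\<in>S'. C x y \<longrightarrow> C y x" using S'S Suc.prems(3) by blast
  moreover have "\<forall>x\<in>S'. \<forall>y\<in>S'. C x y \<and> precedes p x y \<longrightarrow> f x < f y"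
    using S'S Suc.prems(4) by blast
  ultimately obtain Ps where Ps: "respecting_phase_seq C S' p Ps" "length Ps \<le> m"
    using Suc.IH[of S'] by blast
  show ?case
  proof (cases "top = {}")
    case True
    then have "S = S'" using SS by simp
    then show ?thesis using Ps by (intro exI[of _ Ps]) simp
  next
    case False
    have cf: "conflict_free C top"
      unfolding conflict_free_def
    proof (intro ballI impI notI)
      fix x y assume xy: "x \<in> top" "y \<in> top" "x \<noteq> y" "C x y"
      then have "x \<in> set p" "y \<in> set p" using Suc.prems(2) unfolding top_def by auto
      then have "precedes p x y \<or> precedes p y x" using precedes_total xy by metis
      moreover have "C y x" using Suc.prems(3) xy unfolding top_def by auto
      moreover have "x \<in> S" "y \<in> S" "f x = m" "f y = m" using xy unfolding top_def by auto
      ultimately show False using Suc.prems(4) xy by (metis less_irrefl)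
    qed
    have sub: "\<forall>i<length Ps. Ps ! i \<subseteq> S'" using Ps(1) unfolding respecting_phase_seq_def
      by (auto simp: nth_mem)
    have disj: "S' \<inter> top = {}" unfolding S'_def top_def by auto
    let ?Q = "Ps @ [top]"
    have "respecting_phase_seq C S p ?Q"
      unfolding respecting_phase_seq_def
    proof (intro conjI allI impI)
      fix i assume "i < length ?Q"
      then show "?Q ! i \<noteq> {}" "conflict_free C (?Q ! i)"
        using Ps(1) False cf unfolding respecting_phase_seq_def
        by (auto simp: nth_append less_Suc_eq)
    next
      fix i j assume h: "i < length ?Q \<and> j < length ?Q \<and> i \<noteq> j"
      show "?Q ! i \<inter> ?Q ! j = {}"
      proof (cases "i < length Ps")
        case True
        show ?thesis
        proof (cases "j < length Ps")
          case True
          then show ?thesis using Ps(1) h \<open>i < length Ps\<close> unfolding respecting_phase_seq_def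
            by (auto simp: nth_append)
        next
          case False
          then have "j = length Ps" using h by auto
          then show ?thesis using sub disj True by (auto simp: nth_append)
        qed
      next
        case False
        then have "i = length Ps" using h by auto
        then have "j < length Ps" using h by auto
        then show ?thesis using sub disj \<open>i = length Ps\<close> by (auto simp: nth_append)
      qed
    next
      show "\<Union> (set ?Q) = S" using Ps(1) SS unfolding respecting_phase_seq_def by auto
    next
      fix i j x y assume h: "i < length ?Q \<and> j < length ?Q \<and> x \<in> ?Q ! i \<and> y \<in> ?Q ! j \<and>
        C x y \<and> precedes p x y"
      show "i < j"
      proof (cases "i < length Ps")
        case True
        show ?thesis
        proof (cases "j < length Ps")
          case True
          then have "x \<in> Ps ! i" "y \<in> Ps ! j" using h \<open>i < length Ps\<close> by (auto simp: nth_append)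
          then show ?thesis using Ps(1) h True \<open>i < length Ps\<close> unfolding respecting_phase_seq_def
            by blast
        next
          case False
          then show ?thesis using h True by auto
        qed
      next
        case False
        then have "i = length Ps" using h by auto
        then have xt: "x \<in> top" using h by (simp add: nth_append)
        show ?thesis
        proof (rule ccontr)
          assume "\<not> i < j"
          have "y \<in> S \<and> f y \<le> m"
          proof (cases "j < length Ps")
            case True
            then have "y \<in> S'" using sub h by (auto simp: nth_append)
            then show ?thesis unfolding S'_def by auto
          next
            case False
            then have "j = length Ps" using h by auto
            then have "y \<in> top" using h by (simp add: nth_append)
            then show ?thesis unfolding top_def by auto
          qed
          moreover have "x \<in> S" "f x = m" using xt unfolding top_def by auto
          ultimately show False using h Suc.prems(4) by fastforce
        qed
      qed
    qed
    then show ?thesis using Ps(2) by (intro exI[of _ ?Q]) auto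
  qed
qed

lemma phases_lower:
  assumes "respecting_phase_seq C S p Ps" "set xs \<subseteq> S"
    "\<forall>i. i + 1 < length xs \<longrightarrow> C (xs ! i) (xs ! (i + 1)) \<and> precedes p (xs ! i) (xs ! (i + 1))"
  shows "length xs \<le> length Ps"
proof -
  have cov: "\<forall>x\<in>S. \<exists>j<length Ps. x \<in> Ps ! j" using assms(1) unfolding respecting_phase_seq_def
    by (auto simp: in_set_conv_nth)
  have "\<forall>i<length xs. \<exists>j<length Ps. i \<le> j \<and> xs ! i \<in> Ps ! j"
  proof (intro allI)
    fix i show "i < length xs \<longrightarrow> (\<exists>j<length Ps. i \<le> j \<and> xs ! i \<in> Ps ! j)"
    proof (induction i)
      case 0
      then show ?case using cov assms(2) by (auto simp: nth_mem subset_iff)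
    next
      case (Suc i)
      show ?case
      proof
        assume "Suc i < length xs"
        then obtain j where j: "j < length Ps" "i \<le> j" "xs ! i \<in> Ps ! j" using Suc by auto
        obtain j' where j': "j' < length Ps" "xs ! Suc i \<in> Ps ! j'"
          using cov assms(2) \<open>Suc i < length xs\<close> by (meson nth_mem subsetD)
        have "j < j'" using assms(1) j j' assms(3) \<open>Suc i < length xs\<close>
          unfolding respecting_phase_seq_def by (metis Suc_eq_plus1)
        then show "\<exists>j<length Ps. Suc i \<le> j \<and> xs ! Suc i \<in> Ps ! j" using j j' by auto
      qed
    qed
  qed
  then show ?thesis
  proof (cases "xs = []")
    case False
    then have "length xs - 1 < length xs" by simp
    then obtain j where "j < length Ps" "length xs - 1 \<le> j"
      using \<open>\<forall>i<length xs. \<exists>j<length Ps. i \<le> j \<and> xs ! i \<in> Ps ! j\<close> by blast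
    then show ?thesis by linarith
  qed simp
qed


lemma exists_phases:
  assumes "total_order_of T p" "\<forall>x\<in>T. \<forall>y\<in>T. C x y \<longrightarrow> C y x"
  shows "\<exists>Ps. respecting_phase_seq C T p Ps \<and> length Ps \<le> length p"
proof -
  have d: "distinct p" and s: "set p = T" using assms(1) unfolding total_order_of_def by auto
  define pos where "pos x = (THE i. i < length p \<and> p ! i = x)" for x
  have pos: "pos (p ! i) = i" if "i < length p" for i
    unfolding pos_def using that d by (auto intro!: the_equality simp: nth_eq_iff_index_eq)
  have A: "\<forall>x\<in>T. pos x < length p"
  proof
    fix x assume "x \<in> T"
    then obtain i where "i < length p" "p ! i = x" using s by (auto simp: in_set_conv_nth)
    then show "pos x < length p" using pos by auto
  qed
  have B: "\<forall>x\<in>T. \<forall>y\<in>T. C x y \<and> precedes p x y \<longrightarrow> pos x < pos y"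
  proof (intro ballI impI)
    fix x y assume "C x y \<and> precedes p x y"
    then obtain i j where "i < j" "j < length p" "p ! i = x" "p ! j = y"
      unfolding precedes_def by blast
    then show "pos x < pos y" using pos by auto
  qed
  have "T \<subseteq> set p" using s by simp
  from phases_from_fun[OF A this assms(2) B] show ?thesis .
qed

lemma np_ex:
  assumes "total_order_of T p" "\<forall>x\<in>T. \<forall>y\<in>T. C x y \<longrightarrow> C y x"
  shows "\<exists>Ps. respecting_phase_seq C T p Ps \<and> length Ps = num_phases C T p"
proof -
  have "\<exists>m Ps. respecting_phase_seq C T p Ps \<and> length Ps = m"
    using exists_phases[OF assms] by blast
  from LeastI_ex[OF this] show ?thesis unfolding num_phases_def by blast
qed

lemma np_le:
  assumes "respecting_phase_seq C T p Ps"
  shows "num_phases C T p \<le> length Ps"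
  unfolding num_phases_def using assms by (intro Least_le) blast

lemma np_lower:
  assumes "total_order_of T p" "\<forall>x\<in>T. \<forall>y\<in>T. C x y \<longrightarrow> C y x" "set xs \<subseteq> T"
    "\<forall>i. i + 1 < length xs \<longrightarrow> C (xs ! i) (xs ! (i + 1)) \<and> precedes p (xs ! i) (xs ! (i + 1))"
  shows "length xs \<le> num_phases C T p"
proof -
  obtain Ps where Ps: "respecting_phase_seq C T p Ps" "length Ps = num_phases C T p"
    using np_ex[OF assms(1,2)] by blast
  have "length xs \<le> length Ps" by (rule phases_lower[OF Ps(1) assms(3,4)])
  then show ?thesis using Ps(2) by simp
qed

lemma np_mv:
  assumes "total_order_of T p" "\<forall>x\<in>T. \<forall>y\<in>T. C x y \<longrightarrow> C y x" "x \<in> T"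
  shows "num_phases C T (mv x p) \<le> num_phases C T p + 1"
proof -
  obtain Ps where Ps: "respecting_phase_seq C T p Ps" "length Ps = num_phases C T p"
    using np_ex[OF assms(1,2)] by blast
  define idx where "idx y = (SOME j. j < length Ps \<and> y \<in> Ps ! j)" for y
  have idx: "idx y < length Ps \<and> y \<in> Ps ! idx y" if "y \<in> T" for y
  proof -
    have "y \<in> \<Union> (set Ps)" using Ps(1) that unfolding respecting_phase_seq_def by simp
    then obtain P where "P \<in> set Ps" "y \<in> P" by blast
    then have "\<exists>j. j < length Ps \<and> y \<in> Ps ! j" by (metis in_set_conv_nth)
    then show ?thesis unfolding idx_def by (rule someI_ex)
  qed
  have R: "\<And>i j u v. i < length Ps \<Longrightarrow> j < length Ps \<Longrightarrow> u \<in> Ps ! i \<Longrightarrow> v \<in> Ps ! j \<Longrightarrow>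
      C u v \<Longrightarrow> precedes p u v \<Longrightarrow> i < j"
    using Ps(1) unfolding respecting_phase_seq_def by blast
  define f where "f y = (if y = x then 0 else Suc (idx y))" for y
  have tm: "total_order_of T (mv x p)" using mv_total assms by metis
  have A: "\<forall>y\<in>T. f y < length Ps + 1" using idx unfolding f_def by auto
  have B: "T \<subseteq> set (mv x p)" using tm unfolding total_order_of_def by auto
  have D: "\<forall>a\<in>T. \<forall>b\<in>T. C a b \<and> precedes (mv x p) a b \<longrightarrow> f a < f b"
  proof (intro ballI impI)
    fix a b assume ab: "a \<in> T" "b \<in> T" "C a b \<and> precedes (mv x p) a b"
    then have pr: "(x = a \<and> b \<in> set (filter (\<lambda>y. y \<noteq> x) p)) \<or> precedes (filter (\<lambda>y. y \<noteq> x) p) a b"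
      unfolding mv_def precedes_Cons by simp
    have bx: "b \<noteq> x"
    proof
      assume "b = x"
      then show False using pr precedes_set[of "filter (\<lambda>y. y \<noteq> x) p" a b] by auto
    qed
    show "f a < f b"
    proof (cases "a = x")
      case True
      then show ?thesis using bx unfolding f_def by simp
    next
      case False
      then have "precedes (filter (\<lambda>y. y \<noteq> x) p) a b" using pr by simp
      then have "precedes p a b" by (rule precedes_filter)
      moreover have "idx a < length Ps" "a \<in> Ps ! idx a" "idx b < length Ps" "b \<in> Ps ! idx b"
        using idx ab by auto
      ultimately have "idx a < idx b" using R ab by blast
      then show ?thesis using False bx unfolding f_def by simp
    qed
  qed
  obtain Qs where Qs: "respecting_phase_seq C T (mv x p) Qs" "length Qs \<le> length Ps + 1"
    using phases_from_fun[OF A B assms(2) D] by blast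
  have "num_phases C T (mv x p) \<le> length Qs" by (rule np_le[OF Qs(1)])
  then show ?thesis using Qs(2) Ps(2) by linarith
qed

lemma discrete_ivt:
  fixes g :: "nat \<Rightarrow> nat"
  shows "(\<forall>k<L. g k \<le> g (Suc k) + 1) \<Longrightarrow> g L \<le> v \<Longrightarrow> v \<le> g 0 \<Longrightarrow> \<exists>k\<le>L. g k = v"
proof (induction L)
  case 0
  then show ?case by auto
next
  case (Suc L)
  show ?case
  proof (cases "g L \<le> v")
    case True
    have "\<forall>k<L. g k \<le> g (Suc k) + 1" using Suc.prems(1) by simp
    then obtain k where "k \<le> L" "g k = v" using Suc.IH True Suc.prems(3) by blast
    then show ?thesis by (intro exI[of _ k]) simp
  next
    case False
    have "g L \<le> g (Suc L) + 1" using Suc.prems(1) by simp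
    then have "g (Suc L) = v" using Suc.prems(2) False by linarith
    then show ?thesis by blast
  qed
qed


lemma rhs_nonpos:
  fixes a b :: nat
  assumes "b \<le> 1 \<or> a + 1 \<le> b"
  shows "\<lceil>(real a - (real b - 1)) / (real b - 1)\<rceil> \<le> 0"
proof -
  have "(real a - (real b - 1)) / (real b - 1) \<le> 0"
  proof (cases "b \<le> 1")
    case True
    then show ?thesis by (intro divide_nonneg_nonpos) auto
  next
    case False
    then show ?thesis using assms by (intro divide_nonpos_nonneg) auto
  qed
  then show ?thesis by (simp add: ceiling_le_iff)
qed

lemma rhs_le:
  fixes a b :: nat
  assumes "2 \<le> b" "b \<le> a + 1"
  shows "\<lceil>(real a - (real b - 1)) / (real b - 1)\<rceil> \<le> int (a + 1 - b)"
proof -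
  have x: "real a - (real b - 1) \<ge> 0" using assms by auto
  have "(real a - (real b - 1)) / (real b - 1) \<le> real a - (real b - 1)"
    using assms x by (simp add: divide_le_eq mult_le_cancel_left1)
  also have "\<dots> = real (a + 1 - b)" using assms by (simp add: of_nat_diff)
  finally show ?thesis by (simp add: ceiling_le_iff)
qed

theorem theorem6:
  fixes T :: "'a set" and C :: "'a \<Rightarrow> 'a \<Rightarrow> bool"
  assumes "finite T"
    and "\<forall>x\<in>T. \<forall>y\<in>T. C x y \<longrightarrow> C y x"
    and "\<forall>x\<in>T. \<not> C x x"
    and "\<exists>x\<in>T. \<exists>y\<in>T. C x y"
  shows "int (card {concurrency_level C T \<pi> | \<pi>. total_order_of T \<pi>}) \<ge>
           \<lceil>(real (ch C T) - (real (min_phases C T) - 1)) / (real (min_phases C T) - 1)\<rceil>"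
proof -
  define Ord where "Ord = {\<pi>. total_order_of T \<pi>}"
  define M where "M = min_phases C T"
  define L where "L = ch C T"
  define S where "S = {concurrency_level C T \<pi> | \<pi>. total_order_of T \<pi>}"
  have finO: "finite Ord"
  proof (rule finite_subset)
    show "Ord \<subseteq> {xs. set xs \<subseteq> T \<and> length xs \<le> card T}"
    proof
      fix p assume "p \<in> Ord"
      then have "distinct p" "set p = T" unfolding Ord_def total_order_of_def by auto
      then have "length p = card T" using distinct_card by metis
      then show "p \<in> {xs. set xs \<subseteq> T \<and> length xs \<le> card T}" using \<open>set p = T\<close> by simp
    qed
    show "finite {xs. set xs \<subseteq> T \<and> length xs \<le> card T}"
      using assms(1) by (rule finite_lists_length_le)
  qed
  have neO: "Ord \<noteq> {}" using finite_distinct_list[OF assms(1)] unfolding Ord_def total_order_of_def by auto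
  have Meq: "{num_phases C T \<pi> | \<pi>. total_order_of T \<pi>} = num_phases C T ` Ord" unfolding Ord_def by auto
  have "M \<in> num_phases C T ` Ord" unfolding M_def min_phases_def Meq
    using finO neO by (intro Min_in) auto
  then obtain \<sigma> where \<sigma>: "total_order_of T \<sigma>" "num_phases C T \<sigma> = M" unfolding Ord_def by auto
  have finS: "finite S"
  proof -
    have "S = concurrency_level C T ` Ord" unfolding S_def Ord_def by auto
    then show ?thesis using finO by simp
  qed
  have chset: "{length xs | xs. conflict_chain C T xs} \<subseteq> {..card T}"
  proof
    fix n assume "n \<in> {length xs | xs. conflict_chain C T xs}"
    then obtain ys where ys: "n = length ys" "distinct ys" "set ys \<subseteq> T"
      unfolding conflict_chain_def by blast
    have "card (set ys) \<le> card T" using card_mono[OF assms(1) ys(3)] .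
    then show "n \<in> {..card T}" using ys distinct_card by (metis atMost_iff)
  qed
  have "L \<in> {length xs | xs. conflict_chain C T xs}" unfolding L_def ch_def
  proof (rule Max_in)
    show "finite {length xs | xs. conflict_chain C T xs}" using finite_subset[OF chset] by simp
    have "conflict_chain C T []" unfolding conflict_chain_def by simp
    then show "{length xs | xs. conflict_chain C T xs} \<noteq> {}" by blast
  qed
  then obtain xs where xs: "conflict_chain C T xs" "length xs = L" by blast
  have xsT: "set xs \<subseteq> T" and xsd: "distinct xs" using xs(1) unfolding conflict_chain_def by auto
  show ?thesis
  proof (cases "M \<le> 1 \<or> L + 1 \<le> M")
    case True
    then have "\<lceil>(real L - (real M - 1)) / (real M - 1)\<rceil> \<le> 0" by (rule rhs_nonpos)
    moreover have "0 \<le> int (card S)" by simp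
    ultimately show ?thesis unfolding M_def L_def S_def by linarith
  next
    case False
    then have M2: "2 \<le> M" "M \<le> L + 1" by auto
    define g where "g k = num_phases C T (foldr mv (drop k xs) \<sigma>)" for k
    have tot: "total_order_of T (foldr mv (drop k xs) \<sigma>)" for k
      using foldr_mv_total[OF \<sigma>(1)] xsT by (meson set_drop_subset subset_trans)
    have gL: "g L = M" unfolding g_def using xs(2) \<sigma>(2) by simp
    have g0: "L \<le> g 0"
    proof -
      have "length xs \<le> num_phases C T (foldr mv xs \<sigma>)"
      proof (rule np_lower[OF _ assms(2) xsT])
        show "total_order_of T (foldr mv xs \<sigma>)" using tot[of 0] by simp
        show "\<forall>i. i + 1 < length xs \<longrightarrow> C (xs ! i) (xs ! (i + 1)) \<and>
            precedes (foldr mv xs \<sigma>) (xs ! i) (xs ! (i + 1))"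
          using xs(1) foldr_mv_precedes[OF xsd] unfolding conflict_chain_def by blast
      qed
      then show ?thesis unfolding g_def using xs(2) by simp
    qed
    have step: "\<forall>k<L. g k \<le> g (Suc k) + 1"
    proof (intro allI impI)
      fix k assume "k < L"
      then have "drop k xs = xs ! k # drop (Suc k) xs" using xs(2) by (simp add: Cons_nth_drop_Suc)
      then have "foldr mv (drop k xs) \<sigma> = mv (xs ! k) (foldr mv (drop (Suc k) xs) \<sigma>)" by simp
      moreover have "xs ! k \<in> T" using xsT \<open>k < L\<close> xs(2) by (auto simp: nth_mem subset_iff)
      ultimately show "g k \<le> g (Suc k) + 1" unfolding g_def using np_mv[OF tot assms(2)] by simp
    qed
    have sub: "{M..L} \<subseteq> num_phases C T ` Ord"
    proof
      fix v assume "v \<in> {M..L}"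
      then obtain k where "k \<le> L" "g k = v" using discrete_ivt[OF step] gL g0 by fastforce
      then show "v \<in> num_phases C T ` Ord" unfolding g_def Ord_def using tot by blast
    qed
    have "(\<lambda>v. real (card T) / real v) ` {M..L} \<subseteq> S"
    proof
      fix c assume "c \<in> (\<lambda>v. real (card T) / real v) ` {M..L}"
      then obtain v where "v \<in> {M..L}" "c = real (card T) / real v" by blast
      then obtain \<pi> where "\<pi> \<in> Ord" "num_phases C T \<pi> = v" using sub by blast
      then show "c \<in> S" unfolding S_def Ord_def concurrency_level_def
        using \<open>c = real (card T) / real v\<close> by auto
    qed
    moreover have "inj_on (\<lambda>v. real (card T) / real v) {M..L}"
    proof -
      have "T \<noteq> {}" using assms(4) by blast
      then have "card T > 0" using assms(1) by (simp add: card_gt_0_iff)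
      then show ?thesis using M2 unfolding inj_on_def by (auto simp: field_simps)
    qed
    ultimately have "card {M..L} \<le> card S"
      using finS by (metis card_image card_mono)
    then have "L + 1 - M \<le> card S" by simp
    moreover have "\<lceil>(real L - (real M - 1)) / (real M - 1)\<rceil> \<le> int (L + 1 - M)"
      using M2 by (rule rhs_le)
    ultimately show ?thesis unfolding M_def L_def S_def by linarith
  qed
qed

end
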